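(* Let $n_i:=2^{2^i}$ and $t_n:=1/n$. If $100\le i<j$ then $f_{n_i}(t_{n_j})=0$ and $B_{n_j}(f_{n_i},t_{n_j})\ge -\frac{9}{8n_j}$.
   Context: Nodes: $x_{k,n}:=2k/n-1$, $k=0,\dots,n$. $B_n(f,x):=N_n(f,x)/D_n(x)$ for $x$ not a node, $B_n(f,x_{k,n}):=f(x_{k,n})$, with $N_n(f,x)=\sum_{k=0}^n(-1)^k\frac{f(x_{k,n})}{x-x_{k,n}}$, $D_n(x)=\sum_{k=0}^n(-1)^k\frac{1}{x-x_{k,n}}$. For $m$ such that $\sqrt m$ is an integer multiple of $4$, define $f_m:\mathbb{R}\to\mathbb{R}$ by: $f_m(x)=0$ for $x<1/m$ or $x\ge(\sqrt m-3)/m$; $f_m(x)=x-1/m$ for $1/m\le x<2/m$; $f_m(x)=\frac{4p+3}{m}-x$ for $0\le p\le\frac{\sqrt m-8}{4}$ and $\frac{4p+2}{m}\le x<\frac{4p+4}{m}$; $f_m(x)=x-\frac{4p+1}{m}$ for $1\le p\le\frac{\sqrt m-8}{4}$ and $\frac{4p}{m}\le x<\frac{4p+2}{m}$; $f_m(x)=x-\frac{\sqrt m-3}{m}$ for $\frac{\sqrt m-4}{m}\le x<\frac{\sqrt m-3}{m}$. *)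

theory Defs
  imports Complex_Main
begin

definition node :: "nat \<Rightarrow> nat \<Rightarrow> real" where
  "node n k = 2 * real k / real n - 1"

definition Nsum :: "nat \<Rightarrow> (real \<Rightarrow> real) \<Rightarrow> real \<Rightarrow> real" where
  "Nsum n f x = (\<Sum>k=0..n. (-1) ^ k * f (node n k) / (x - node n k))"

definition Dsum :: "nat \<Rightarrow> real \<Rightarrow> real" where
  "Dsum n x = (\<Sum>k=0..n. (-1) ^ k / (x - node n k))"

definition berrut :: "nat \<Rightarrow> (real \<Rightarrow> real) \<Rightarrow> real \<Rightarrow> real" where
  "berrut n f x = (if (\<exists>k\<le>n. x = node n k) then f x else Nsum n f x / Dsum n x)"

text \<open>The sawtooth function f_m (meaningful when sqrt m is a multiple of 4).\<close>
definition fm :: "nat \<Rightarrow> real \<Rightarrow> real" where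
  "fm m x = (let r = real m; s = sqrt r in
     if x < 1 / r \<or> x \<ge> (s - 3) / r then 0
     else if 1 / r \<le> x \<and> x < 2 / r then x - 1 / r
     else if (\<exists>p::nat. real p \<le> (s - 8) / 4 \<and> (4 * real p + 2) / r \<le> x \<and> x < (4 * real p + 4) / r)
       then (4 * real (SOME p::nat. real p \<le> (s - 8) / 4 \<and> (4 * real p + 2) / r \<le> x \<and> x < (4 * real p + 4) / r) + 3) / r - x
     else if (\<exists>p::nat. 1 \<le> p \<and> real p \<le> (s - 8) / 4 \<and> (4 * real p) / r \<le> x \<and> x < (4 * real p + 2) / r)
       then x - (4 * real (SOME p::nat. 1 \<le> p \<and> real p \<le> (s - 8) / 4 \<and> (4 * real p) / r \<le> x \<and> x < (4 * real p + 2) / r) + 1) / r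
     else if (s - 4) / r \<le> x \<and> x < (s - 3) / r then x - (s - 3) / r
     else 0)"

definition nseq :: "nat \<Rightarrow> nat" where
  "nseq i = 2 ^ (2 ^ i)"

definition tpt :: "nat \<Rightarrow> real" where
  "tpt n = 1 / real n"

end

theory Submission
  imports Defs
begin



definition Ef :: "nat \<Rightarrow> nat \<Rightarrow> nat \<Rightarrow> real \<Rightarrow> real" where
"Ef S m c x = (if 1 \<le> c \<and> c + 4 \<le> S then (if 2 \<le> c mod 4 then (4*real(c div 4)+3)/real m - x
   else x - (4*real(c div 4)+1)/real m) else 0)"

lemma fm_half:
  assumes mS: "m = S^2" and S4: "4 dvd S" and S8: "8 \<le> S"
    and lo: "real c / real m \<le> x" and hi: "x < (real c + 1) / real m"
  shows "fm m x = Ef S m c x"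
proof -
  have mpos: "real m > 0" using mS S8 by simp
  have s: "sqrt (real m) = real S" using mS by simp
  define u where "u = real m * x"
  have xu: "x = u / real m" using mpos u_def by simp
  have lo': "real c \<le> u" using lo mpos by (simp add: u_def pos_divide_le_eq mult.commute)
  have hi': "u < real c + 1" using hi mpos by (simp add: u_def pos_less_divide_eq mult.commute)
  have cmp: "\<And>a. (a / real m \<le> x) = (a \<le> u)" "\<And>a. (x < a / real m) = (u < a)"
    using mpos by (auto simp: u_def pos_divide_le_eq pos_less_divide_eq mult.commute)
  obtain T where T: "S = 4 * T" using S4 by auto
  define p where "p = c div 4"
  have cp: "c = 4 * p + c mod 4" unfolding p_def by simp
  have m4: "c mod 4 < 4" by simp
  show ?thesis
  proof (cases "1 \<le> c \<and> c + 4 \<le> S")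
    case False
    then have "c = 0 \<or> S \<le> c + 3" by auto
    then have "u < 1 \<or> real S - 3 \<le> u"
    proof
      assume "c = 0" then show ?thesis using hi' by simp
    next
      assume "S \<le> c + 3" then have "real S \<le> real c + 3" by linarith
      then show ?thesis using lo' by simp
    qed
    then show ?thesis using False unfolding fm_def Let_def s Ef_def by (auto simp: cmp)
  next
    case True
    then have c1: "1 \<le> c" and cS: "c + 4 \<le> S" by auto
    have rc: "1 \<le> real c" "real c + 4 \<le> real S" using c1 cS by linarith+
    have nf: "\<not> (x < 1 / real m \<or> x \<ge> (real S - 3) / real m)"
      using rc lo' hi' by (simp add: cmp)
    show ?thesis
    proof (cases "c = 1")
      case True
      then show ?thesis using nf lo' hi' unfolding fm_def Let_def s Ef_def by (simp add: cmp)
    next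
      case False
      then have c2: "2 \<le> c" using c1 by simp
      have ns: "\<not> (1 / real m \<le> x \<and> x < 2 / real m)" using c2 lo' by (simp add: cmp)
      show ?thesis
      proof (cases "2 \<le> c mod 4")
        case True
        define P where "P = (\<lambda>q::nat. real q \<le> (real S - 8) / 4 \<and> (4 * real q + 2) / real m \<le> x \<and> x < (4 * real q + 4) / real m)"
        have c4: "4 * p + 2 \<le> c" "c \<le> 4*p+3" using True cp m4 by linarith+
        have "p + 2 \<le> T" using c4 cS T by linarith
        then have pT: "real p + 2 \<le> real T" by linarith
        have Pp: "P p" unfolding P_def cmp using c4 pT T lo' hi' by (simp; linarith?)
        have uq: "\<And>q. P q \<Longrightarrow> q = p"
        proof -
          fix q assume "P q"
          then have a: "4 * real q + 2 \<le> u" "u < 4 * real q + 4" unfolding P_def cmp by auto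
          have "real (4*q+2) < real (4*p+4)" using a hi' c4 by (simp; linarith?)
          moreover have "real (4*p+2) < real (4*q+4)" using a lo' c4 by (simp; linarith?)
          ultimately show "q = p" by linarith
        qed
        have "(SOME q. P q) = p" using Pp uq by (rule some_equality)
        then show ?thesis using nf ns Pp True c1 cS unfolding fm_def Let_def s Ef_def P_def p_def
          by auto
      next
        case False
        have c4: "4 * p \<le> c" "c \<le> 4*p+1" using False cp m4 by linarith+
        have p1: "1 \<le> p" using c2 c4 by linarith
        have n3: "\<not> (\<exists>q::nat. real q \<le> (real S - 8) / 4 \<and> (4 * real q + 2) / real m \<le> x \<and> x < (4 * real q + 4) / real m)"
        proof
          assume "\<exists>q::nat. real q \<le> (real S - 8) / 4 \<and> (4 * real q + 2) / real m \<le> x \<and> x < (4 * real q + 4) / real m"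
          then obtain q where a: "4 * real q + 2 \<le> u" "u < 4 * real q + 4" unfolding cmp by auto
          have "real (4*q+2) < real (4*p+2)" using a hi' c4 by (simp; linarith?)
          moreover have "real (4*p) < real (4*q+4)" using a lo' c4 by (simp; linarith?)
          ultimately show False unfolding of_nat_less_iff by presburger
        qed
        define P where "P = (\<lambda>q::nat. 1 \<le> q \<and> real q \<le> (real S - 8) / 4 \<and> (4 * real q) / real m \<le> x \<and> x < (4 * real q + 2) / real m)"
        have uq: "\<And>q. (4 * real q) / real m \<le> x \<Longrightarrow> x < (4 * real q + 2) / real m \<Longrightarrow> q = p"
        proof -
          fix q assume "(4 * real q) / real m \<le> x" "x < (4 * real q + 2) / real m"
          then have a: "4 * real q \<le> u" "u < 4 * real q + 2" unfolding cmp by auto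
          have "real (4*q) < real (4*p+2)" using a hi' c4 by (simp; linarith?)
          moreover have "real (4*p) < real (4*q+2)" using a lo' c4 by (simp; linarith?)
          ultimately show "q = p" by linarith
        qed
        show ?thesis
        proof (cases "c + 4 = S")
          case True
          have n4: "\<not> (\<exists>q. P q)"
          proof
            assume "\<exists>q. P q"
            then obtain q where "P q" by auto
            then have "q = p" "real q \<le> (real S - 8) / 4" using uq unfolding P_def by auto
            then show False using True c4 T by (simp; linarith?)
          qed
          have "4 * p = c" using True c4 T by presburger
          then have "4 * real p = real c" by linarith
          then show ?thesis using nf ns n3 n4 True c1 cS lo' hi' False unfolding fm_def Let_def s Ef_def P_def p_def
            by (auto simp: cmp)
        next
          case ne: False
          have "p + 2 \<le> T" using c4 cS ne T by linarith
          then have pT: "real p + 2 \<le> real T" by linarith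
          have Pp: "P p" unfolding P_def cmp using c4 pT T lo' hi' p1 by (simp; linarith?)
          have "(SOME q. P q) = p" using Pp uq unfolding P_def by (rule some_equality) auto
          then show ?thesis using nf ns n3 Pp False c1 cS unfolding fm_def Let_def s Ef_def P_def p_def
            by auto
        qed
      qed
    qed
  qed
qed

lemma Ef_cont:
  assumes S4: "4 dvd S" and mpos: "m > 0"
  shows "Ef S m c ((real c + 1) / real m) = Ef S m (Suc c) ((real c + 1) / real m)"
proof -
  obtain T where T: "S = 4 * T" using S4 by auto
  obtain q r where c: "c = 4 * q + r" and r: "r < 4" using div_mod_decomp[of c 4] by (metis mod_less_divisor zero_less_numeral mult.commute)
  have "r = 0 \<or> r = 1 \<or> r = 2 \<or> r = 3" using r by arith
  then show ?thesis
  proof (elim disjE)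
  
    assume r0: "r = 0"
    have d: "c div 4 = q" "c mod 4 = 0" "Suc c div 4 = q" "Suc c mod 4 = 1" using c r0 by arith+
    show ?thesis unfolding Ef_def d using c T r0 mpos by (auto simp: field_simps; presburger)
  next
    assume r1: "r = 1"
    have d: "c div 4 = q" "c mod 4 = 1" "Suc c div 4 = q" "Suc c mod 4 = 2" using c r1 by arith+
    show ?thesis unfolding Ef_def d using c T r1 mpos by (auto simp: field_simps; presburger)
  next
    assume r2: "r = 2"
    have d: "c div 4 = q" "c mod 4 = 2" "Suc c div 4 = q" "Suc c mod 4 = 3" using c r2 by arith+
    show ?thesis unfolding Ef_def d using c T r2 mpos by (auto simp: field_simps; presburger)
  next
    assume r3: "r = 3"
    have d: "c div 4 = q" "c mod 4 = 3" "Suc c div 4 = q + 1" "Suc c mod 4 = 0" using c r3 by arith+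
    show ?thesis unfolding Ef_def d using c T r3 mpos by (auto simp: field_simps; presburger)
  qed
qed

lemma fm_closed:
  assumes mS: "m = S^2" and S4: "4 dvd S" and S8: "8 \<le> S"
    and lo: "real c / real m \<le> x" and hi: "x \<le> (real c + 1) / real m"
  shows "fm m x = Ef S m c x"
proof (cases "x < (real c + 1) / real m")
  case True then show ?thesis using fm_half[OF mS S4 S8 lo] by simp
next
  case False
  have mpos: "m > 0" using mS S8 by simp
  have x: "x = (real c + 1) / real m" using False hi by simp
  have "fm m x = Ef S m (Suc c) x"
    by (rule fm_half[OF mS S4 S8]) (use x mpos in \<open>auto simp: field_simps\<close>)
  then show ?thesis using Ef_cont[OF S4 mpos, of c] x by simp
qed

lemma Ef_mid: "Ef S m c a + Ef S m c b = 2 * Ef S m c ((a + b) / 2)"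
  unfolding Ef_def by (auto simp: field_simps)

lemma Ef_bound:
  assumes mpos: "m > 0" and lo: "real c / real m \<le> x" and hi: "x \<le> (real c + 1) / real m"
  shows "\<bar>Ef S m c x\<bar> \<le> 1 / real m"
proof -
  have lo': "real c \<le> real m * x" and hi': "real m * x \<le> real c + 1"
    using lo hi mpos by (auto simp: field_simps)
  obtain q r where c: "c = 4 * q + r" and r: "r < 4" using div_mod_decomp[of c 4] by (metis mod_less_divisor zero_less_numeral mult.commute)
  have d: "c div 4 = q" "c mod 4 = r" using c r by arith+
  have e: "real m * Ef S m c x = (if 1 \<le> c \<and> c + 4 \<le> S then (if 2 \<le> r then 4*real q+3 - real m * x
   else real m * x - (4*real q+1)) else 0)"
    unfolding Ef_def d using mpos by (simp add: field_simps)
  have rr: "real c = 4 * real q + real r" using c by simp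
  have "\<bar>real m * Ef S m c x\<bar> \<le> 1"
    unfolding e using lo' hi' rr r by (auto simp: abs_le_iff)
  then show ?thesis using mpos by (simp add: abs_mult field_simps)
qed

lemma fm_zero:
  assumes "x < 1 / real m" shows "fm m x = 0"
  using assms unfolding fm_def Let_def by simp

lemma fm_bound:
  assumes mS: "m = S^2" and S4: "4 dvd S" and S8: "8 \<le> S"
  shows "\<bar>fm m x\<bar> \<le> 1 / real m"
proof (cases "x < 1 / real m")
  case True then show ?thesis using fm_zero by simp
next
  case False
  have mpos: "m > 0" using mS S8 by simp
  have x0: "0 \<le> real m * x" using False mpos by (simp add: field_simps)
  define c where "c = nat \<lfloor>real m * x\<rfloor>"
  have "real c \<le> real m * x" "real m * x < real c + 1" using x0 unfolding c_def by linarith+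
  then have lo: "real c / real m \<le> x" and hi: "x < (real c + 1) / real m"
    using mpos by (auto simp: field_simps)
  show ?thesis using fm_half[OF mS S4 S8 lo hi] Ef_bound[OF mpos lo] hi by simp
qed



lemma alt_pair:
  fixes G :: "nat \<Rightarrow> real"
  assumes G0: "G 0 = 0" and mid: "\<And>q. G (2*q) + G (2*q+2) = 2 * G (2*q+1)"
  shows "(\<Sum>j<2*Q. (-1)^j * G j) = - G (2*Q) / 2"
proof (induction Q)
  case 0 then show ?case using G0 by simp
next
  case (Suc Q)
  have e: "2 * Suc Q = Suc (Suc (2*Q))" by simp
  have p1: "(-1::real)^(2*Q) = 1" "(-1::real)^(Suc (2*Q)) = -1" by simp_all
  have "(\<Sum>j<2*Suc Q. (-1)^j * G j) = (\<Sum>j<2*Q. (-1)^j * G j) + G (2*Q) - G (2*Q+1)"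
    unfolding e sum.lessThan_Suc p1 by simp
  also have "\<dots> = - G (2*Suc Q) / 2" using Suc mid[of Q] unfolding e by simp
  finally show ?case .
qed

lemma alt_partial_bound:
  fixes G :: "nat \<Rightarrow> real"
  assumes G0: "G 0 = 0" and mid: "\<And>q. G (2*q) + G (2*q+2) = 2 * G (2*q+1)"
    and bnd: "\<And>j. \<bar>G j\<bar> \<le> B"
  shows "(\<Sum>j\<le>n. (-1)^j * G j) \<le> B / 2"
proof -
  have e: "(\<Sum>j\<le>n. (-1)^j * G j) = (\<Sum>j<Suc n. (-1)^j * G j)" by (simp add: lessThan_Suc_atMost)
  show ?thesis
  proof (cases "even (Suc n)")
    case True
    then obtain Q where Q: "Suc n = 2*Q" by (rule evenE)
    show ?thesis unfolding e Q alt_pair[OF G0 mid] using bnd[of "2*Q"] by (simp add: abs_le_iff)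
  next
    case False
    then obtain Q where Q: "Suc n = Suc (2*Q)" by (metis oddE add.commute plus_1_eq_Suc)
    have "(-1::real)^(2*Q) = 1" by simp
    then have "(\<Sum>j<Suc (2*Q). (-1)^j * G j) = - G (2*Q) / 2 + G (2*Q)"
      unfolding sum.lessThan_Suc alt_pair[OF G0 mid] by simp
    then show ?thesis unfolding e Q using bnd[of "2*Q"] by (simp add: abs_le_iff)
  qed
qed

lemma abel_bound:
  fixes a w :: "nat \<Rightarrow> real"
  assumes wdec: "\<And>j. w (Suc j) \<le> w j" and wpos: "\<And>j. 0 \<le> w j"
    and A: "\<And>n. (\<Sum>j\<le>n. a j) \<le> C"
  shows "(\<Sum>j\<le>n. a j * w j) \<le> C * w 0"
proof -
  have h: "(\<Sum>j\<le>n. a j * w j) \<le> C * w 0 - (C - (\<Sum>j\<le>n. a j)) * w n" for n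
  proof (induction n)
    case 0 then show ?case by (simp add: algebra_simps)
  next
    case (Suc n)
    have "(C - (\<Sum>j\<le>n. a j)) * w (Suc n) \<le> (C - (\<Sum>j\<le>n. a j)) * w n"
      using A[of n] wdec[of n] by (intro mult_left_mono) auto
    then show ?case using Suc by (simp add: algebra_simps)
  qed
  moreover have "0 \<le> (C - (\<Sum>j\<le>n. a j)) * w n" using A[of n] wpos[of n] by simp
  ultimately show ?thesis using h[of n] by linarith
qed


lemma m1pow: "(-1::real)^n = (if even n then 1 else -1)" by simp

lemma m1rev: "even h \<Longrightarrow> i < h \<Longrightarrow> (-1::real)^(h - Suc i) = - ((-1)^i)"
  unfolding m1pow by auto

lemma sum_split: "(\<Sum>k<(a::nat)+b. f k) = (\<Sum>k<a. f k) + (\<Sum>i<b. (f (a+i)::real))"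
  by (induction b) (auto simp: add.assoc)

lemma alt_nonneg:
  fixes b :: "nat \<Rightarrow> real"
  assumes dec: "\<And>i. b (Suc i) \<le> b i" and pos: "\<And>i. 0 \<le> b i"
  shows "0 \<le> (\<Sum>i<n. (-1)^i * b i)"
proof -
  have ev: "0 \<le> (\<Sum>i<2*Q. (-1)^i * b i)" for Q
  proof (induction Q)
    case 0 then show ?case by simp
  next
    case (Suc Q)
    have e: "2 * Suc Q = Suc (Suc (2*Q))" by simp
    have p1: "(-1::real)^(2*Q) = 1" "(-1::real)^(Suc (2*Q)) = -1" by simp_all
    show ?case unfolding e sum.lessThan_Suc p1 using Suc dec[of "2*Q"] by simp
  qed
  show ?thesis
  proof (cases "even n")
    case True then obtain Q where "n = 2*Q" by (rule evenE)
    then show ?thesis using ev by simp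
  next
    case False then obtain Q where Q: "n = Suc (2*Q)" by (metis oddE add.commute plus_1_eq_Suc)
    have p1: "(-1::real)^(2*Q) = 1" by simp
    show ?thesis unfolding Q sum.lessThan_Suc p1 using ev[of Q] pos[of "2*Q"] by simp
  qed
qed

lemma alt_le_first:
  fixes b :: "nat \<Rightarrow> real"
  assumes dec: "\<And>i. b (Suc i) \<le> b i" and pos: "\<And>i. 0 \<le> b i"
  shows "(\<Sum>i<n. (-1)^i * b i) \<le> b 0"
proof (cases n)
  case 0 then show ?thesis using pos by simp
next
  case (Suc n')
  have "(\<Sum>i<n. (-1)^i * b i) = b 0 - (\<Sum>i<n'. (-1)^i * b (Suc i))"
    unfolding Suc sum.lessThan_Suc_shift by (simp add: sum_negf[symmetric])
  moreover have "0 \<le> (\<Sum>i<n'. (-1)^i * b (Suc i))"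
    by (rule alt_nonneg[where b="\<lambda>i. b (Suc i)"]) (use dec pos in auto)
  ultimately show ?thesis by linarith
qed

lemma Dlow:
  fixes h :: nat
  assumes he: "even h" and h2: "2 \<le> h"
  shows "(\<Sum>k\<le>2*h. (-1)^k / (2 * real h + 1 - 2 * real k)) \<ge> (4/3::real)"
proof -
  define g where "g k = (-1::real)^k / (2 * real h + 1 - 2 * real k)" for k
  define b where "b i = 1 / (2 * real i + 3)" for i
  have bdec: "\<And>i. b (Suc i) \<le> b i" and bpos: "\<And>i. 0 \<le> b i" unfolding b_def by (auto simp: field_simps)
  have bb: "\<And>n. (\<Sum>i<n. (-1)^i * b i) \<le> 1/3"
    using alt_le_first[where b=b, OF bdec bpos] by (simp add: b_def)
  have L: "(\<Sum>k<h. g k) = - (\<Sum>i<h. (-1)^i * b i)"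
  proof -
    have "(\<Sum>k<h. g k) = (\<Sum>i<h. g (h - Suc i))"
      using sum.atLeastLessThan_rev[of g 0 h] by (simp add: atLeast0LessThan)
    also have "\<dots> = (\<Sum>i<h. - ((-1)^i * b i))"
    proof (rule sum.cong)
      fix i assume "i \<in> {..<h}"
      then have i: "i < h" by simp
      have "2 * real h + 1 - 2 * real (h - Suc i) = 2 * real i + 3" using i by (simp add: of_nat_diff)
      then show "g (h - Suc i) = - ((-1)^i * b i)" unfolding g_def b_def m1rev[OF he i] by simp
    qed simp
    finally show ?thesis by (simp add: sum_negf)
  qed
  have R: "(\<Sum>i<h-1. g (h+2+i)) = - (\<Sum>i<h-1. (-1)^i * b i)"
  proof -
    have "(\<Sum>i<h-1. g (h+2+i)) = (\<Sum>i<h-1. - ((-1)^i * b i))"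
    proof (rule sum.cong)
      fix i
      have "2 * real h + 1 - 2 * real (h+2+i) = - (2 * real i + 3)" by simp
      moreover have "(-1::real)^(h+2+i) = (-1)^i" using he by (simp add: power_add)
      ultimately have "g (h+2+i) = (-1)^i / (- (2 * real i + 3))" unfolding g_def by simp
      also have "\<dots> = - ((-1)^i * b i)" unfolding b_def by (simp add: divide_simps algebra_simps)
      finally show "g (h+2+i) = - ((-1)^i * b i)" .
    qed simp
    then show ?thesis by (simp add: sum_negf)
  qed
  have gh: "g h = 1" "g (h+1) = 1" unfolding g_def using he by simp_all
  have "(\<Sum>k\<le>2*h. g k) = (\<Sum>k<h + (2 + (h-1)). g k)"
  proof -
    have "h + (2 + (h - 1)) = Suc (2*h)" using h2 by simp
    then show ?thesis by (simp only: lessThan_Suc_atMost)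
  qed
  also have "\<dots> = (\<Sum>k<h. g k) + g h + g (h+1) + (\<Sum>i<h-1. g (h+2+i))"
    unfolding sum_split by (simp add: numeral_2_eq_2 add.assoc)
  finally have "(\<Sum>k\<le>2*h. g k) = (\<Sum>k<h. g k) + g h + g (h+1) + (\<Sum>i<h-1. g (h+2+i))" .
  moreover have "(\<Sum>k\<le>2*h. (-1)^k / (2 * real h + 1 - 2 * real k)) = (\<Sum>k\<le>2*h. g k)" by (simp add: g_def)
  ultimately show ?thesis using L R gh bb[of h] bb[of "h-1"] by linarith
qed

lemma core:
  fixes r S m N :: nat
  assumes r1: "1 \<le> r" and mS: "m = S^2" and S4: "4 dvd S" and S8: "8 \<le> S" and N: "N = 4*r*m"
  shows "berrut N (fm m) (1 / real N) \<ge> - 9 / (8 * real N)"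
proof -
  have mpos: "real m > 0" using mS S8 by simp
  have rpos: "real r \<ge> 1" using r1 by simp
  have rN: "real N = 4 * real r * real m" using N by simp
  have Npos: "real N > 0" using rN mpos rpos by simp
  have nd: "node N k = (2 * real k - real N) / real N" for k
    unfolding node_def using Npos by (simp add: field_simps)
  have nn: "\<not> (\<exists>k\<le>N. 1 / real N = node N k)"
  proof
    assume "\<exists>k\<le>N. 1 / real N = node N k"
    then obtain k where "1 / real N = (2 * real k - real N) / real N" using nd by auto
    then have "1 = 2 * real k - real N" using Npos by (simp add: divide_cancel_right)
    then have "real (2*k) = real (N + 1)" by simp
    then have "2*k = N+1" by (simp only: of_nat_eq_iff)
    moreover have "even N" using N by simp
    ultimately show False by presburger
  qed
  define h where "h = 2*r*m"
  have Nh: "N = 2*h" unfolding h_def N by simp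
  have he: "even h" unfolding h_def by simp
  have h2: "2 \<le> h"
  proof -
    have "1 \<le> m" using mS S8 by simp
    then have "1 \<le> r*m" using r1 by simp
    then show ?thesis unfolding h_def by simp
  qed
  have D: "Dsum N (1 / real N) = real N * (\<Sum>k\<le>2*h. (-1)^k / (2 * real h + 1 - 2 * real k))"
  proof -
    have "Dsum N (1 / real N) = (\<Sum>k\<le>N. (-1)^k / (1 / real N - node N k))"
      unfolding Dsum_def by (simp add: atLeast0AtMost)
    also have "\<dots> = (\<Sum>k\<le>N. real N * ((-1)^k / (2 * real h + 1 - 2 * real k)))"
    proof (rule sum.cong)
      fix k
      have "1 / real N - node N k = (2 * real h + 1 - 2 * real k) / real N"
        unfolding nd using Npos Nh by (simp add: field_simps)
      then show "(-1)^k / (1 / real N - node N k) = real N * ((-1)^k / (2 * real h + 1 - 2 * real k))"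
        by simp
    qed simp
    finally show ?thesis unfolding Nh by (simp add: sum_distrib_left)
  qed
  have Dlo: "Dsum N (1 / real N) \<ge> real N * (4/3)"
    unfolding D using Dlow[OF he h2] Npos by (intro mult_left_mono) auto
  define k0 where "k0 = 2*r*(m+1)"
  define J where "J = N - k0"
  define G where "G j = real N * fm m (node N (k0+j))" for j
  define w where "w j = 1 / (4 * real r - 1 + 2 * real j)" for j
  have k0N: "k0 + Suc J = Suc N"
  proof -
    have "1 \<le> m" using mS S8 by simp
    then have "r \<le> r*m" by simp
    then have "2*r*(m+1) \<le> 4*r*m" by (simp add: algebra_simps)
    then show ?thesis unfolding J_def k0_def N by simp
  qed
  have nk: "node N (k0+j) = (4*real r + 2*real j) / real N" for j
    unfolding nd k0_def rN by (simp add: algebra_simps)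
  have Gb: "\<And>j. \<bar>G j\<bar> \<le> 4 * real r"
  proof -
    fix j
    have "\<bar>G j\<bar> = real N * \<bar>fm m (node N (k0+j))\<bar>" unfolding G_def using Npos by (simp add: abs_mult)
    also have "\<dots> \<le> real N * (1 / real m)" using fm_bound[OF mS S4 S8] Npos by (intro mult_left_mono) auto
    also have "\<dots> = 4 * real r" unfolding rN using mpos by simp
    finally show "\<bar>G j\<bar> \<le> 4 * real r" .
  qed
  have G0: "G 0 = 0"
  proof -
    have x: "node N (k0+0) = 1 / real m" unfolding nk rN using mpos rpos by (simp add: field_simps)
    have "fm m (1 / real m) = Ef S m 1 (1 / real m)"
      by (rule fm_half[OF mS S4 S8]) (use mpos in \<open>auto simp: field_simps\<close>)
    also have "\<dots> = 0" unfolding Ef_def by simp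
    finally show ?thesis unfolding G_def x by simp
  qed
  have Gmid: "\<And>q. G (2*q) + G (2*q+2) = 2 * G (2*q+1)"
  proof -
    fix q
    define d where "d = q div r"
    have d1: "r * d \<le> q" unfolding d_def by simp
    have d2: "q + 1 \<le> r * d + r"
    proof -
      have "q = r * d + q mod r" unfolding d_def by simp
      moreover have "q mod r < r" using r1 by simp
      ultimately show ?thesis by linarith
    qed
    have d1r: "real r * real d \<le> real q" using d1 by (simp only: of_nat_le_iff of_nat_mult[symmetric])
    have "real (q + 1) \<le> real (r * d + r)" using d2 by (simp only: of_nat_le_iff)
    then have d2r: "real q + 1 \<le> real r * real d + real r" by simp
    define c where "c = Suc d"
    define a where "a = node N (k0 + 2*q)"
    define b where "b = node N (k0 + (2*q+2))"
    have mid: "node N (k0 + (2*q+1)) = (a + b) / 2" unfolding a_def b_def nk using Npos by (simp add: field_simps)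
    have ab: "a = (real r + real q) / (real r * real m)" "b = (real r + real q + 1) / (real r * real m)"
      unfolding a_def b_def nk rN using mpos rpos by (simp_all add: field_simps)
    have rm: "real r * real m > 0" using mpos rpos by simp
    have l1: "real r * real c \<le> real r + real q" unfolding c_def using d1r by (simp add: algebra_simps)
    have l2: "real r + real q + 1 \<le> real r * (real c + 1)" unfolding c_def using d2r by (simp add: algebra_simps)
    have e1: "real c / real m = (real r * real c) / (real r * real m)" using rpos by simp
    have e2: "(real c + 1) / real m = (real r * (real c + 1)) / (real r * real m)" using rpos by simp
    have lo: "real c / real m \<le> a" unfolding ab e1 using divide_right_mono[OF l1, of "real r * real m"] rm by simp
    have hi: "b \<le> (real c + 1) / real m" unfolding ab e2 using divide_right_mono[OF l2, of "real r * real m"] rm by simp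
    have ab': "a \<le> b" unfolding ab using mpos rpos by (simp add: field_simps)
    have fa: "fm m a = Ef S m c a" by (rule fm_closed[OF mS S4 S8 lo]) (use hi ab' in linarith)
    have fb: "fm m b = Ef S m c b" by (rule fm_closed[OF mS S4 S8 _ hi]) (use lo ab' in linarith)
    have h1: "a \<le> (a+b)/2" and h2: "(a+b)/2 \<le> b" using ab' by simp_all
    have m1: "real c / real m \<le> (a+b)/2" by (rule order_trans[OF lo h1])
    have m2: "(a+b)/2 \<le> (real c + 1) / real m" by (rule order_trans[OF h2 hi])
    have fc: "fm m ((a+b)/2) = Ef S m c ((a+b)/2)" by (rule fm_closed[OF mS S4 S8 m1 m2])
    have "fm m a + fm m b = 2 * fm m ((a+b)/2)" unfolding fa fb fc by (rule Ef_mid)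
    then show "G (2*q) + G (2*q+2) = 2 * G (2*q+1)"
      unfolding G_def mid a_def[symmetric] b_def[symmetric] by (simp add: distrib_left[symmetric])
  qed
  have Nsum_eq: "Nsum N (fm m) (1 / real N) = - (\<Sum>j\<le>J. (-1)^j * G j * w j)"
  proof -
    define t where "t k = (-1)^k * fm m (node N k) / (1 / real N - node N k)" for k
    have "Nsum N (fm m) (1 / real N) = (\<Sum>k<k0 + Suc J. t k)"
      unfolding Nsum_def t_def k0N by (simp add: atLeast0AtMost lessThan_Suc_atMost)
    also have "\<dots> = (\<Sum>k<k0. t k) + (\<Sum>j<Suc J. t (k0 + j))" by (rule sum_split)
    also have "(\<Sum>k<k0. t k) = 0"
    proof (rule sum.neutral, rule ballI)
      fix k assume "k \<in> {..<k0}"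
      then have "real k < real k0" by simp
      then have "2 * real k - real N < 4 * real r" unfolding k0_def rN by (simp add: algebra_simps)
      then have "node N k < 4 * real r / real N" unfolding nd using Npos by (simp add: divide_strict_right_mono)
      also have "4 * real r / real N = 1 / real m" unfolding rN using rpos mpos by (simp add: field_simps)
      finally show "t k = 0" unfolding t_def using fm_zero by simp
    qed
    also have "(\<Sum>j<Suc J. t (k0 + j)) = (\<Sum>j\<le>J. - ((-1)^j * G j * w j))"
      unfolding lessThan_Suc_atMost[symmetric]
    proof (rule sum.cong)
      fix j
      have ev: "(-1::real)^(k0+j) = (-1)^j" unfolding k0_def by (simp add: power_add)
      have den: "1 / real N - node N (k0+j) = - ((4 * real r - 1 + 2 * real j) / real N)"
        unfolding nk using Npos by (simp add: field_simps)
      have dpos: "4 * real r - 1 + 2 * real j > 0" using rpos by simp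
      show "t (k0 + j) = - ((-1)^j * G j * w j)"
        unfolding t_def ev den G_def w_def using dpos Npos by (simp add: field_simps)
    qed simp
    finally show ?thesis by (simp add: sum_negf)
  qed
  have wdec: "\<And>j. w (Suc j) \<le> w j" and wpos: "\<And>j. 0 \<le> w j"
    unfolding w_def using rpos by (auto simp: field_simps)
  have "(\<Sum>j\<le>J. (-1)^j * G j * w j) \<le> (4 * real r / 2) * w 0"
    using abel_bound[where a="\<lambda>j. (-1)^j * G j" and w=w, OF wdec wpos alt_partial_bound[OF G0 Gmid Gb]] .
  also have "\<dots> \<le> 1" unfolding w_def using rpos by (simp add: field_simps)
  finally have Nlo: "Nsum N (fm m) (1 / real N) \<ge> -1" unfolding Nsum_eq by simp
  have Dpos: "Dsum N (1 / real N) > 0" using Dlo Npos by linarith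
  have "berrut N (fm m) (1 / real N) = Nsum N (fm m) (1 / real N) / Dsum N (1 / real N)"
    unfolding berrut_def using nn by (simp only: if_not_P[OF nn] if_False)
  also have "\<dots> \<ge> -1 / Dsum N (1 / real N)" using Nlo Dpos using divide_right_mono[OF Nlo, of "Dsum N (1 / real N)"] by simp
  finally have "berrut N (fm m) (1 / real N) \<ge> -1 / Dsum N (1 / real N)" .
  moreover have "-1 / Dsum N (1 / real N) \<ge> - 9 / (8 * real N)"
    using Dlo Dpos Npos by (simp add: field_simps)
  ultimately show ?thesis by linarith
qed


theorem lemma1:
  fixes i j :: nat
  assumes "100 \<le> i" and "i < j"
  shows "fm (nseq i) (tpt (nseq j)) = 0 \<and>
         berrut (nseq j) (fm (nseq i)) (tpt (nseq j)) \<ge> - 9 / (8 * real (nseq j))"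
proof -
  define S :: nat where "S = 2^(2^(i-1))"
  define r :: nat where "r = 2^(2^j - 2^i - 2)"
  have i1: "2^i = 2 * 2^(i-1)" using assms(1)
    by (metis Suc_diff_1 less_le_trans not_less_eq_eq numeral_le_one_iff semiring_norm(69) power_Suc zero_less_numeral zero_less_one le_numeral_extra(4) one_le_numeral linorder_not_less nat_less_le)
  have mS: "nseq i = S^2" unfolding nseq_def S_def power_mult[symmetric] using i1 by (simp add: mult.commute)
  have ii: "(2::nat) \<le> 2^(i-1)"
  proof -
    have "(2::nat)^1 \<le> 2^(i-1)" using assms(1) by (intro power_increasing) auto
    then show ?thesis by simp
  qed
  have S4: "4 dvd S"
  proof -
    have "(2::nat)^(i-1) = 2 + (2^(i-1) - 2)" using ii by simp
    then have "S = 2^(2 + (2^(i-1) - 2))" unfolding S_def by metis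
    then have "S = 2^2 * 2^(2^(i-1) - 2)" by (simp only: power_add)
    then show ?thesis by simp
  qed
  have S8: "8 \<le> S"
  proof -
    have "(2::nat)^3 \<le> 2^(2^(i-1))"
    proof (rule power_increasing)
      have "(2::nat)^2 \<le> 2^(i-1)" using assms(1) by (intro power_increasing) auto
      then show "3 \<le> (2::nat)^(i-1)" by simp
    qed simp
    then show ?thesis unfolding S_def by simp
  qed
  have r1: "1 \<le> r" unfolding r_def by simp
  have jj: "2^i + 2 \<le> (2::nat)^j"
  proof -
    have "(2::nat)^(Suc i) \<le> 2^j" using assms(2) by (intro power_increasing) auto
    moreover have "(2::nat) \<le> 2^i" using assms(1)
      by (metis le_trans one_le_numeral power_increasing power_one_right le_add1 dual_order.trans numeral_le_iff semiring_norm(69) Suc_leI zero_less_numeral less_le_trans le_numeral_extra(4) not_less_eq_eq)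
    ultimately show ?thesis by simp
  qed
  have N: "nseq j = 4 * r * nseq i"
  proof -
    have "2^j = 2 + (2^j - 2^i - 2) + (2::nat)^i" using jj by simp
    then have "nseq j = 2^(2 + (2^j - 2^i - 2) + 2^i)" unfolding nseq_def by metis
    then show ?thesis unfolding nseq_def r_def power_add by simp
  qed
  have mpos: "0 < nseq i" unfolding nseq_def by simp
  have lt: "nseq i < nseq j" unfolding N using mpos r1 by simp
  have z: "fm (nseq i) (tpt (nseq j)) = 0"
    unfolding tpt_def by (rule fm_zero) (use lt mpos in \<open>simp add: frac_less2\<close>)
  show ?thesis using z core[OF r1 mS S4 S8 N] unfolding tpt_def by simp
qed

end
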